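(* Let $\mathcal F$ be a family of finite graphs and let $I_{\mathcal F}\colon T_{\mathrm{Graph}}\leadsto\mathrm{Forb}_{T_{\mathrm{Graph}}}(\mathcal F)$ be the axiom-adding interpretation, where $\mathrm{Forb}_{T_{\mathrm{Graph}}}(\mathcal F)$ is the theory of graphs containing no induced copy of any member of $\mathcal F$. If $\mathcal F$ contains a complete graph, then $$\chi(I_{\mathcal F})=\max\bigl(\{\ell\in\mathbb{N}_+:\mathcal F\text{ contains no complete $\ell$-partite graph}\}\cup\{0\}\bigr)+1=\min\{\ell\in\mathbb{N}_+:\mathcal F\text{ contains a complete $\ell$-partite graph}\};$$ otherwise $\chi(I_{\mathcal F})=\infty$.
   Context: A complete graph is $K_n$ for some $n\ge 0$ (all pairs of distinct vertices adjacent). A graph $G$ is complete $\ell$-partite if there exists a function $f\colon V(G)\to[\ell]$ (not necessarily surjective, so parts may be empty) such that distinct vertices $v,w$ are adjacent iff $f(v)\neq f(w)$. Membership of a graph in $\mathcal F$ is up to isomorphism. For $T=\mathrm{Forb}_{T_{\mathrm{Graph}}}(\mathcal F)$ and $I=I_{\mathcal F}$, $I(N)=N$ and $\chi(I)=\sup(\{\ell\in\mathbb{N}_+:\forall n\in\mathbb{N}\ \exists N\in\mathcal M_n[T],\ T_{n,\ell}\subseteq I(N)\}\cup\{0\})+1$, where $\mathcal M_n[T]$ is the set of $n$-vertex models of $T$ up to isomorphism, $T_{n,\ell}$ is the complete $\ell$-partite graph on $n$ vertices with parts of sizes $\lfloor n/\ell\rfloor$ or $\lceil n/\ell\rceil$,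 and $G\subseteq H$ means there is an injection $V(G)\to V(H)$ mapping edges to edges. *)

theory Defs
  imports Main "HOL-Library.Extended_Nat"
begin

text \<open>Finite simple graphs: a vertex set together with an adjacency relation.
  Vertices are natural numbers (every finite graph is isomorphic to one of these).\<close>
type_synonym graph = "nat set \<times> (nat \<Rightarrow> nat \<Rightarrow> bool)"

definition verts :: "graph \<Rightarrow> nat set" where "verts G = fst G"
definition adj :: "graph \<Rightarrow> nat \<Rightarrow> nat \<Rightarrow> bool" where "adj G = snd G"

definition is_graph :: "graph \<Rightarrow> bool" where
  "is_graph G \<longleftrightarrow> finite (verts G)
     \<and> (\<forall>x y. adj G x y \<longrightarrow> x \<in> verts G \<and> y \<in> verts G)
     \<and> (\<forall>x y. adj G x y \<longrightarrow> adj G y x)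
     \<and> (\<forall>x. \<not> adj G x x)"

definition induced_sub :: "graph \<Rightarrow> graph \<Rightarrow> bool" where
  "induced_sub G H \<longleftrightarrow> (\<exists>f. inj_on f (verts G) \<and> f ` verts G \<subseteq> verts H
     \<and> (\<forall>x\<in>verts G. \<forall>y\<in>verts G. adj G x y \<longleftrightarrow> adj H (f x) (f y)))"

definition subgraph :: "graph \<Rightarrow> graph \<Rightarrow> bool" where
  "subgraph G H \<longleftrightarrow> (\<exists>f. inj_on f (verts G) \<and> f ` verts G \<subseteq> verts H
     \<and> (\<forall>x\<in>verts G. \<forall>y\<in>verts G. adj G x y \<longrightarrow> adj H (f x) (f y)))"

text \<open>Models of Forb(F): graphs containing no induced copy of a member of F.\<close>
definition forb :: "graph set \<Rightarrow> graph \<Rightarrow> bool" where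
  "forb F H \<longleftrightarrow> is_graph H \<and> (\<forall>G\<in>F. \<not> induced_sub G H)"

definition complete_graph :: "graph \<Rightarrow> bool" where
  "complete_graph G \<longleftrightarrow> (\<forall>x\<in>verts G. \<forall>y\<in>verts G. x \<noteq> y \<longrightarrow> adj G x y)"

text \<open>Complete l-partite (parts may be empty).\<close>
definition complete_partite :: "nat \<Rightarrow> graph \<Rightarrow> bool" where
  "complete_partite l G \<longleftrightarrow> (\<exists>f. (\<forall>v\<in>verts G. f v \<in> {1..l}) \<and>
     (\<forall>v\<in>verts G. \<forall>w\<in>verts G. v \<noteq> w \<longrightarrow> (adj G v w \<longleftrightarrow> f v \<noteq> f w)))"

text \<open>Turan graph T(n,l): vertices 0..n-1, parts given by residue mod l
  (part sizes floor(n/l) or ceil(n/l)).\<close>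
definition turan :: "nat \<Rightarrow> nat \<Rightarrow> graph" where
  "turan n l = ({0..<n}, \<lambda>i j. i < n \<and> j < n \<and> i mod l \<noteq> j mod l)"

definition chi_set :: "graph set \<Rightarrow> nat set" where
  "chi_set F = {l. l \<ge> 1 \<and> (\<forall>n. \<exists>N. forb F N \<and> card (verts N) = n \<and> subgraph (turan n l) N)}"

definition chi :: "graph set \<Rightarrow> enat" where
  "chi F = Sup (enat ` chi_set F \<union> {0}) + 1"

end

theory Submission imports Defs "HOL-Library.Ramsey" begin

lemma cp_mono:
  assumes "complete_partite l G" "l \<le> l'" shows "complete_partite l' G"
proof -
  obtain f where "\<forall>v\<in>verts G. f v \<in> {1..l}"
    "\<forall>v\<in>verts G. \<forall>w\<in>verts G. v \<noteq> w \<longrightarrow> (adj G v w \<longleftrightarrow> f v \<noteq> f w)"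
    using assms(1) unfolding complete_partite_def by blast
  then show ?thesis unfolding complete_partite_def using assms(2)
    by (intro exI[of _ f]) auto
qed

lemma complete_cp:
  assumes "is_graph G" "complete_graph G"
  shows "complete_partite (max 1 (card (verts G))) G"
proof -
  have fin: "finite (verts G)" using assms(1) by (simp add: is_graph_def)
  obtain f where f: "bij_betw f (verts G) {0..<card (verts G)}"
    using ex_bij_betw_finite_nat[OF fin] by blast
  show ?thesis unfolding complete_partite_def
  proof (intro exI[of _ "\<lambda>v. f v + 1"] conjI ballI impI)
    fix v assume "v \<in> verts G"
    then have "f v < card (verts G)" using f by (auto simp: bij_betw_def)
    then show "f v + 1 \<in> {1..max 1 (card (verts G))}" by auto
  next
    fix v w assume "v \<in> verts G" "w \<in> verts G" "v \<noteq> w"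
    then show "adj G v w = (f v + 1 \<noteq> f w + 1)"
      using f assms(2) unfolding complete_graph_def bij_betw_def inj_on_def by auto
  qed
qed

lemma turan_graph: "is_graph (turan n l)" "card (verts (turan n l)) = n"
  by (auto simp: is_graph_def turan_def verts_def adj_def)

lemma turan_ok:
  assumes "l \<ge> 1" "\<forall>G\<in>F. \<not> complete_partite l G"
  shows "forb F (turan n l)"
  unfolding forb_def
proof (intro conjI ballI turan_graph)
  fix G assume "G \<in> F"
  show "\<not> induced_sub G (turan n l)"
  proof
    assume "induced_sub G (turan n l)"
    then obtain h where h: "inj_on h (verts G)" "h ` verts G \<subseteq> verts (turan n l)"
      "\<forall>x\<in>verts G. \<forall>y\<in>verts G. adj G x y \<longleftrightarrow> adj (turan n l) (h x) (h y)"
      unfolding induced_sub_def by blast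
    have "complete_partite l G" unfolding complete_partite_def
    proof (intro exI[of _ "\<lambda>v. h v mod l + 1"] conjI ballI impI)
      fix v assume "v \<in> verts G" then show "h v mod l + 1 \<in> {1..l}"
        using assms(1) by (simp add: Suc_leI)
    next
      fix v w assume vw: "v \<in> verts G" "w \<in> verts G" "v \<noteq> w"
      then show "adj G v w = (h v mod l + 1 \<noteq> h w mod l + 1)"
        using h by (auto simp: turan_def adj_def verts_def)
    qed
    then show False using assms(2) \<open>G \<in> F\<close> by blast
  qed
qed

lemma sub_refl: "subgraph G G"
  unfolding subgraph_def by (intro exI[of _ id]) auto

definition Kn :: "nat \<Rightarrow> graph" where "Kn n = ({0..<n}, \<lambda>i j. i < n \<and> j < n \<and> i \<noteq> j)"

lemma Kn_ok:
  assumes "\<forall>G\<in>F. \<not> complete_graph G"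
  shows "forb F (Kn n)" "card (verts (Kn n)) = n" "subgraph (turan n l) (Kn n)"
proof -
  show "card (verts (Kn n)) = n" by (simp add: Kn_def verts_def)
  show "subgraph (turan n l) (Kn n)" unfolding subgraph_def
    by (intro exI[of _ id]) (auto simp: Kn_def turan_def verts_def adj_def)
  show "forb F (Kn n)" unfolding forb_def
  proof (intro conjI ballI)
    show "is_graph (Kn n)" by (auto simp: is_graph_def Kn_def verts_def adj_def)
  next
    fix G assume "G \<in> F"
    show "\<not> induced_sub G (Kn n)"
    proof
      assume "induced_sub G (Kn n)"
      then obtain h where h: "inj_on h (verts G)" "h ` verts G \<subseteq> verts (Kn n)"
        "\<forall>x\<in>verts G. \<forall>y\<in>verts G. adj G x y \<longleftrightarrow> adj (Kn n) (h x) (h y)"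
        unfolding induced_sub_def by blast
      have "complete_graph G" unfolding complete_graph_def
        using h by (auto simp: Kn_def adj_def verts_def inj_on_def)
      then show False using assms \<open>G \<in> F\<close> by blast
    qed
  qed
qed


definition edgeset :: "graph \<Rightarrow> nat set set" where
  "edgeset N = {{x,y} | x y. adj N x y}"

lemma edgeset_adj:
  assumes "is_graph N" shows "{a,b} \<in> edgeset N \<longleftrightarrow> adj N a b"
proof
  assume "{a,b} \<in> edgeset N"
  then obtain x y where "{a,b} = {x,y}" "adj N x y" unfolding edgeset_def by blast
  then show "adj N a b" using assms unfolding is_graph_def by (metis doubleton_eq_iff)
qed (auto simp: edgeset_def)

lemma clique_induced:
  assumes N: "is_graph N" and H: "is_graph H" "complete_graph H"
    and R: "R \<subseteq> verts N" "card R = card (verts H)" "clique R (edgeset N)" "finite R"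
  shows "induced_sub H N"
proof -
  have fin: "finite (verts H)" using H by (simp add: is_graph_def)
  obtain f where f: "inj_on f (verts H)" "f ` verts H \<subseteq> R"
    using card_le_inj[OF fin R(4)] R(2) by auto
  show ?thesis unfolding induced_sub_def
  proof (intro exI[of _ f] conjI ballI)
    show "inj_on f (verts H)" using f by simp
    show "f ` verts H \<subseteq> verts N" using f R by blast
    fix x y assume xy: "x \<in> verts H" "y \<in> verts H"
    show "adj H x y \<longleftrightarrow> adj N (f x) (f y)"
    proof (cases "x = y")
      case True then show ?thesis using N H unfolding is_graph_def by auto
    next
      case False
      then have "f x \<noteq> f y" using f xy by (meson inj_on_def)
      then have "adj N (f x) (f y)" using R(3) f xy edgeset_adj[OF N]
        unfolding clique_def by blast
      then show ?thesis using H(2) False xy unfolding complete_graph_def by blast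
    qed
  qed
qed


lemma not_chi:
  assumes G: "is_graph G" "complete_partite L G" "L \<ge> 1" "G \<in> F"
    and H: "is_graph H" "complete_graph H" "H \<in> F" and Ll: "L \<le> l"
  shows "\<exists>n. \<forall>N. forb F N \<longrightarrow> card (verts N) = n \<longrightarrow> \<not> subgraph (turan n l) N"
proof -
  obtain r where r: "r \<ge> 1" "\<forall>(V::nat set) E. finite V \<and> card V \<ge> r \<longrightarrow>
    (\<exists>R\<subseteq>V. card R = card (verts H) \<and> clique R E \<or> card R = card (verts G) \<and> indep R E)"
    using ramsey2[where 'a=nat, of "card (verts H)" "card (verts G)"] by blast
  have l1: "l \<ge> 1" using G(3) Ll by simp
  define n where "n = l * r"
  show ?thesis
  proof (intro exI[of _ n] allI impI notI)
    fix N assume fN: "forb F N" and cN: "card (verts N) = n" and sN: "subgraph (turan n l) N"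
    have N: "is_graph N" using fN by (simp add: forb_def)
    obtain h where h: "inj_on h {0..<n}" "h ` {0..<n} \<subseteq> verts N"
      "\<forall>x\<in>{0..<n}. \<forall>y\<in>{0..<n}. adj (turan n l) x y \<longrightarrow> adj N (h x) (h y)"
      using sN unfolding subgraph_def by (auto simp: turan_def verts_def)
    define V where "V i = (\<lambda>t. i + l*t) ` {..<r}" for i
    have Vsub: "V i \<subseteq> {0..<n}" if "i < l" for i
    proof
      fix x assume "x \<in> V i"
      then obtain t where t: "t < r" "x = i + l*t" unfolding V_def by auto
      have "i + l*t < l + l*t" using that by simp
      also have "\<dots> = l * (t+1)" by simp
      also have "\<dots> \<le> l * r" using t by (intro mult_le_mono2) simp
      finally show "x \<in> {0..<n}" using t by (simp add: n_def)
    qed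
    have Vcard: "card (V i) = r" for i
    proof -
      have "inj_on (\<lambda>t. i + l*t) {..<r}" using l1 by (auto simp: inj_on_def)
      then show ?thesis unfolding V_def by (simp add: card_image)
    qed
    have Vmod: "x mod l = i" if "x \<in> V i" "i < l" for x i
      using that unfolding V_def by auto
    have cross: "adj N x y" if ij: "i < l" "j < l" "i \<noteq> j" "x \<in> h ` V i" "y \<in> h ` V j" for i j x y
    proof -
      obtain a b where ab: "a \<in> V i" "b \<in> V j" "x = h a" "y = h b" using ij by blast
      have "a \<in> {0..<n}" "b \<in> {0..<n}" using ab Vsub ij by blast+
      moreover have "adj (turan n l) a b"
        using ab Vmod ij calculation by (auto simp: turan_def adj_def)
      ultimately show ?thesis using h ab by blast
    qed
    have Wcard: "card (h ` V i) = r" if "i < l" for i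
      using Vcard[of i] card_image inj_on_subset[OF h(1) Vsub[OF that]] by metis
    have "\<exists>I. I \<subseteq> h ` V i \<and> card I = card (verts G) \<and> indep I (edgeset N)" if il: "i < l" for i
    proof -
      have fW: "finite (h ` V i)" unfolding V_def by simp
      obtain R where R: "R \<subseteq> h ` V i" "card R = card (verts H) \<and> clique R (edgeset N) \<or>
          card R = card (verts G) \<and> indep R (edgeset N)"
        using r(2) fW Wcard[OF il] by blast
      have RN: "R \<subseteq> verts N" using R(1) h(2) Vsub[OF il] by blast
      have "\<not> (card R = card (verts H) \<and> clique R (edgeset N))"
      proof
        assume "card R = card (verts H) \<and> clique R (edgeset N)"
        then have "induced_sub H N" using clique_induced[OF N H(1,2) RN] R(1) fW
          by (meson finite_subset)
        then show False using fN H(3) unfolding forb_def by blast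
      qed
      then show ?thesis using R by blast
    qed
    then obtain I where I: "\<And>i. i < l \<Longrightarrow> I i \<subseteq> h ` V i \<and> card (I i) = card (verts G) \<and> indep (I i) (edgeset N)"
      by metis
    obtain g where g: "\<forall>v\<in>verts G. g v \<in> {1..L}"
      "\<forall>v\<in>verts G. \<forall>w\<in>verts G. v \<noteq> w \<longrightarrow> (adj G v w \<longleftrightarrow> g v \<noteq> g w)"
      using G(2) unfolding complete_partite_def by blast
    define A where "A c = {v \<in> verts G. g v = c}" for c
    have finG: "finite (verts G)" using G(1) by (simp add: is_graph_def)
    have "\<exists>f. inj_on f (A c) \<and> f ` A c \<subseteq> I (c - 1)" if cL: "c \<in> {1..L}" for c
    proof -
      have cl: "c - 1 < l" using cL Ll by auto
      have fI: "finite (I (c-1))" using I[OF cl] unfolding V_def by (meson finite_imageI finite_lessThan finite_subset)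
      have "card (A c) \<le> card (verts G)" unfolding A_def using finG by (intro card_mono) auto
      then have "card (A c) \<le> card (I (c-1))" using I[OF cl] by simp
      moreover have "finite (A c)" using finG unfolding A_def by simp
      ultimately show ?thesis using card_le_inj fI by blast
    qed
    then obtain fc where fc: "\<And>c. c \<in> {1..L} \<Longrightarrow> inj_on (fc c) (A c) \<and> fc c ` A c \<subseteq> I (c - 1)"
      by metis
    define phi where "phi v = fc (g v) v" for v
    have phiI: "phi v \<in> I (g v - 1)" "g v - 1 < l" if "v \<in> verts G" for v
      using fc[of "g v"] g(1) that Ll unfolding phi_def A_def by auto
    have phiW: "phi v \<in> h ` V (g v - 1)" if "v \<in> verts G" for v
      using phiI[OF that] I by blast
    have diffc: "adj N (phi v) (phi w)" if "v \<in> verts G" "w \<in> verts G" "g v \<noteq> g w" for v w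
    proof -
      have "g v \<ge> 1" "g w \<ge> 1" using g(1) that by auto
      then have "g v - 1 \<noteq> g w - 1" using that by linarith
      then show ?thesis using cross[OF phiI(2)[OF that(1)] phiI(2)[OF that(2)] _ phiW[OF that(1)] phiW[OF that(2)]] by blast
    qed
    have "induced_sub G N" unfolding induced_sub_def
    proof (intro exI[of _ phi] conjI ballI)
      show "inj_on phi (verts G)"
      proof (rule inj_onI)
        fix v w assume vw: "v \<in> verts G" "w \<in> verts G" "phi v = phi w"
        show "v = w"
        proof (cases "g v = g w")
          case True
          then have "v \<in> A (g v)" "w \<in> A (g v)" using vw unfolding A_def by auto
          moreover have "inj_on (fc (g v)) (A (g v))" using fc g(1) vw by blast
          ultimately show ?thesis using vw True unfolding phi_def by (metis inj_onD)
        next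
          case False
          then have "adj N (phi v) (phi w)" using diffc vw by blast
          then show ?thesis using vw N unfolding is_graph_def by auto
        qed
      qed
      show "phi ` verts G \<subseteq> verts N"
      proof
        fix u assume "u \<in> phi ` verts G"
        then obtain v where v: "v \<in> verts G" "u = phi v" by blast
        have "h ` V (g v - 1) \<subseteq> verts N" using Vsub[OF phiI(2)[OF v(1)]] h(2) by blast
        then show "u \<in> verts N" using phiW[OF v(1)] v(2) by blast
      qed
    next
      fix x y assume xy: "x \<in> verts G" "y \<in> verts G"
      show "adj G x y \<longleftrightarrow> adj N (phi x) (phi y)"
      proof (cases "x = y")
        case True
        have "\<not> adj G x x" using G(1) unfolding is_graph_def by simp
        moreover have "\<not> adj N (phi x) (phi x)" using N unfolding is_graph_def by simp
        ultimately
        show ?thesis using True by simp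
      next
        case False
        show ?thesis
        proof (cases "g x = g y")
          case False
          have "adj G x y" using g(2) xy \<open>x \<noteq> y\<close> False by blast
          then show ?thesis using diffc[OF xy False] by simp
        next
          case True
          have ne: "phi x \<noteq> phi y"
          proof
            assume "phi x = phi y"
            then have "fc (g x) x = fc (g x) y" using True unfolding phi_def by simp
            moreover have "x \<in> A (g x)" "y \<in> A (g x)" using xy True unfolding A_def by auto
            moreover have "inj_on (fc (g x)) (A (g x))" using fc g(1) xy by blast
            ultimately show False using \<open>x \<noteq> y\<close> by (metis inj_onD)
          qed
          have "phi x \<in> I (g x - 1)" "phi y \<in> I (g x - 1)" using phiI(1)[OF xy(1)] phiI(1)[OF xy(2)] True by simp_all
          then have "\<not> adj N (phi x) (phi y)" using I[OF phiI(2)[OF xy(1)]] ne edgeset_adj[OF N]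
            unfolding indep_def by blast
          moreover have "\<not> adj G x y" using g(2) xy True \<open>x \<noteq> y\<close> by blast
          ultimately show ?thesis by simp
        qed
      qed
    qed
    then show False using fN G(4) unfolding forb_def by blast
  qed
qed


lemma max_lt: "L \<ge> 1 \<Longrightarrow> Max {..<(L::nat)} = L - 1"
  by (intro Max_eqI) auto

lemma sup_lt: "L \<ge> 1 \<Longrightarrow> Sup (enat ` {..<(L::nat)}) = enat (L - 1)"
proof -
  assume L: "L \<ge> 1"
  have "Sup (enat ` {..<L}) = Max (enat ` {..<L})"
  proof -
    have "0 \<in> {..<L}" using L by simp
    then have "enat ` {..<L} \<noteq> {}" by blast
    then show ?thesis unfolding Sup_enat_def by simp
  qed
  also have "\<dots> = enat (L - 1)" using L by (intro Max_eqI) auto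
  finally show ?thesis .
qed

theorem mainTheorem14:
  fixes F :: "graph set"
  assumes "\<forall>G\<in>F. is_graph G"
  shows "((\<exists>G\<in>F. complete_graph G) \<longrightarrow>
            chi F = enat (Max ({l. l \<ge> 1 \<and> (\<forall>G\<in>F. \<not> complete_partite l G)} \<union> {0}) + 1)
          \<and> chi F = enat (LEAST l. l \<ge> 1 \<and> (\<exists>G\<in>F. complete_partite l G)))
       \<and> ((\<not> (\<exists>G\<in>F. complete_graph G)) \<longrightarrow> chi F = \<infinity>)"
proof (intro conjI impI)
  assume "\<exists>G\<in>F. complete_graph G"
  then obtain K where K: "K \<in> F" "complete_graph K" by blast
  have Kg: "is_graph K" using K assms by blast
  define P where "P l \<longleftrightarrow> l \<ge> 1 \<and> (\<exists>G\<in>F. complete_partite l G)" for l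
  define L where "L = (LEAST l. P l)"
  have "P (max 1 (card (verts K)))" unfolding P_def using complete_cp[OF Kg K(2)] K(1) by auto
  then have PL: "P L" unfolding L_def by (rule LeastI)
  then have L1: "L \<ge> 1" unfolding P_def by simp
  obtain G where G: "G \<in> F" "complete_partite L G" using PL unfolding P_def by blast
  have Gg: "is_graph G" using G assms by blast
  have notP: "\<not> P l" if "l < L" for l using not_less_Least[OF that[unfolded L_def]] unfolding L_def .
  have chiset: "chi_set F = {..<L} - {0}"
  proof (intro set_eqI iffI)
    fix l assume l: "l \<in> chi_set F"
    then have l1: "l \<ge> 1" and all: "\<forall>n. \<exists>N. forb F N \<and> card (verts N) = n \<and> subgraph (turan n l) N"
      unfolding chi_set_def by auto
    have "l < L"
    proof (rule ccontr)
      assume "\<not> l < L"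
      then obtain n where "\<forall>N. forb F N \<longrightarrow> card (verts N) = n \<longrightarrow> \<not> subgraph (turan n l) N"
        using not_chi[OF Gg G(2) L1 G(1) Kg K(2) K(1)] by force
      then show False using all by blast
    qed
    then show "l \<in> {..<L} - {0}" using l1 by auto
  next
    fix l assume "l \<in> {..<L} - {0}"
    then have l: "l < L" "l \<ge> 1" by auto
    then have "\<forall>G\<in>F. \<not> complete_partite l G" using notP[OF l(1)] unfolding P_def by blast
    then show "l \<in> chi_set F" unfolding chi_set_def
      using turan_ok[OF l(2)] turan_graph sub_refl l(2) by blast
  qed
  have S: "{l. l \<ge> 1 \<and> (\<forall>G\<in>F. \<not> complete_partite l G)} \<union> {0} = {..<L}"
  proof (intro set_eqI iffI)
    fix l assume "l \<in> {l. l \<ge> 1 \<and> (\<forall>G\<in>F. \<not> complete_partite l G)} \<union> {0}"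
    then show "l \<in> {..<L}"
    proof
      assume "l \<in> {l. l \<ge> 1 \<and> (\<forall>G\<in>F. \<not> complete_partite l G)}"
      then have "\<not> complete_partite l G" "l \<ge> 1" using G(1) by auto
      then show ?thesis using cp_mono[OF G(2)] by (meson lessThan_iff not_le)
    qed (use L1 in auto)
  next
    fix l assume "l \<in> {..<L}"
    then show "l \<in> {l. l \<ge> 1 \<and> (\<forall>G\<in>F. \<not> complete_partite l G)} \<union> {0}"
      using notP[of l] unfolding P_def by auto
  qed
  have ch: "chi F = enat L"
  proof -
    have "enat ` chi_set F \<union> {0} = enat ` {..<L}"
      unfolding chiset using L1 by (auto simp: zero_enat_def)
    then have "chi F = enat (L - 1) + 1" unfolding chi_def using sup_lt[OF L1] by simp
    then show ?thesis using L1 by (simp add: one_enat_def)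
  qed
  show "chi F = enat (Max ({l. l \<ge> 1 \<and> (\<forall>G\<in>F. \<not> complete_partite l G)} \<union> {0}) + 1)"
    unfolding S max_lt[OF L1] ch using L1 by simp
  show "chi F = enat (LEAST l. l \<ge> 1 \<and> (\<exists>G\<in>F. complete_partite l G))"
    using ch unfolding L_def P_def .
next
  assume nc: "\<not> (\<exists>G\<in>F. complete_graph G)"
  have "chi_set F = {l. l \<ge> 1}"
  proof -
    have "\<forall>n. \<exists>N. forb F N \<and> card (verts N) = n \<and> subgraph (turan n l) N" for l
    proof
      fix n
      have nc': "\<forall>G\<in>F. \<not> complete_graph G" using nc by blast
      show "\<exists>N. forb F N \<and> card (verts N) = n \<and> subgraph (turan n l) N"
        using Kn_ok(1)[OF nc', of n] Kn_ok(2)[OF nc', of n] Kn_ok(3)[OF nc', of n l] by blast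
    qed
    then show ?thesis unfolding chi_set_def by simp
  qed
  moreover have "infinite (enat ` {l::nat. l \<ge> 1})"
  proof
    assume fi: "finite (enat ` {l::nat. l \<ge> 1})"
    have "inj_on enat {l::nat. l \<ge> 1}" by (simp add: inj_on_def)
    then have "finite {l::nat. l \<ge> 1}" using finite_imageD fi by blast
    moreover have "infinite {l::nat. l \<ge> 1}"
      unfolding infinite_nat_iff_unbounded_le by (metis le_add2 mem_Collect_eq le_add1)
    ultimately show False by blast
  qed
  ultimately have "Sup (enat ` chi_set F \<union> {0}) = \<infinity>"
    unfolding Sup_enat_def by auto
  then show "chi F = \<infinity>" unfolding chi_def by simp
qed

end
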